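(* For every integer $n\ge3$, if $T$ is a uniformly random standard Young tableau of shape $(n,n,n)$, then $$SP\big((n,n,n),[1,3],[2,2]\big)=\Pr(T_{1,3}>T_{2,2})-\Pr(T_{2,2}>T_{1,3})=-\frac{(17n-4)(n-3)}{3(3n-1)(3n-4)}.$$
   Context: A partition (shape) $\lambda=(\lambda_1,\dots,\lambda_k)$ with $\lambda_1\ge\dots\ge\lambda_k>0$ is identified with its Young diagram, the set of cells $[i,j]$ with $1\le i\le k$ and $1\le j\le\lambda_i$ (row $i$, column $j$). A standard Young tableau of shape $\lambda$ with $N=\sum\lambda_i$ cells is a bijective filling $T$ of the cells by $\{1,\dots,N\}$ with $T_{i,j}<T_{i,j+1}$ and $T_{i,j}<T_{i+1,j}$ whenever these cells exist. For cells $c_1,c_2$ of $\lambda$, the sorting probability is $SP(\lambda,c_1,c_2)=\Pr(T_{c_1}>T_{c_2})-\Pr(T_{c_2}>T_{c_1})=2\Pr(T_{c_1}>T_{c_2})-1$, where $T$ is uniformly random among standard Young tableaux of shape $\lambda$. *)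

theory Defs
  imports Main "HOL.Real"
begin

text \<open>A shape is a list of row lengths (lambda_1, ..., lambda_k); cells are pairs (i,j),
  row i, column j, both 1-indexed.\<close>

definition young_diagram :: "nat list \<Rightarrow> (nat \<times> nat) set" where
  "young_diagram lam = {(i, j). 1 \<le> i \<and> i \<le> length lam \<and> 1 \<le> j \<and> j \<le> lam ! (i - 1)}"

text \<open>Standard Young tableaux of shape lam, as fillings of the cells by 1..N
  (extended by 0 outside the diagram, so that the set is finite).\<close>

definition SYT :: "nat list \<Rightarrow> ((nat \<times> nat) \<Rightarrow> nat) set" where
  "SYT lam = {T. bij_betw T (young_diagram lam) {1..sum_list lam}
      \<and> (\<forall>i j. (i, j) \<in> young_diagram lam \<and> (i, j + 1) \<in> young_diagram lam \<longrightarrow> T (i, j) < T (i, j + 1))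
      \<and> (\<forall>i j. (i, j) \<in> young_diagram lam \<and> (i + 1, j) \<in> young_diagram lam \<longrightarrow> T (i, j) < T (i + 1, j))
      \<and> (\<forall>c. c \<notin> young_diagram lam \<longrightarrow> T c = 0)}"

definition sorting_prob :: "nat list \<Rightarrow> nat \<times> nat \<Rightarrow> nat \<times> nat \<Rightarrow> real" where
  "sorting_prob lam c1 c2 =
     (real (card {T \<in> SYT lam. T c1 > T c2}) - real (card {T \<in> SYT lam. T c2 > T c1}))
       / real (card (SYT lam))"

end

theory Submission
  imports Defs "HOL-Library.FuncSet"
begin

lemma yd3: "(i, j) \<in> young_diagram [a, b, c] \<longleftrightarrow>
   1 \<le> j \<and> ((i = 1 \<and> j \<le> a) \<or> (i = 2 \<and> j \<le> b) \<or> (i = 3 \<and> j \<le> c))"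
proof -
  have "i - 1 < 3 \<Longrightarrow> 1 \<le> i \<Longrightarrow> i = 1 \<or> i = 2 \<or> i = 3" by auto
  then show ?thesis unfolding young_diagram_def by (auto simp: nth_Cons split: nat.splits)
qed

lemma SYT_finite: "finite (SYT lam)"
proof -
  have fy: "finite (young_diagram lam)"
  proof -
    have "young_diagram lam \<subseteq> {1..length lam} \<times> {1..sum_list lam}"
      unfolding young_diagram_def
    proof (clarsimp)
      fix a b assume "Suc 0 \<le> a" "a \<le> length lam" "b \<le> lam ! (a - Suc 0)"
      then have "a - 1 < length lam" by simp
      then have "lam ! (a - 1) \<le> sum_list lam" by (rule elem_le_sum_list)
      then show "b \<le> sum_list lam" using \<open>b \<le> lam ! (a - Suc 0)\<close> by simp
    qed
    then show ?thesis by (rule finite_subset) auto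
  qed
  have "SYT lam \<subseteq> {f. \<forall>x. (x \<in> young_diagram lam \<longrightarrow> f x \<in> {1..sum_list lam}) \<and> (x \<notin> young_diagram lam \<longrightarrow> f x = 0)}"
    unfolding SYT_def bij_betw_def by auto
  then show ?thesis by (rule finite_subset) (intro finite_set_of_finite_funs fy, simp)
qed

lemma SYT_val: "T \<in> SYT lam \<Longrightarrow> x \<in> young_diagram lam \<Longrightarrow> T x \<in> {1..sum_list lam}"
  unfolding SYT_def bij_betw_def by auto

lemma SYT_out: "T \<in> SYT lam \<Longrightarrow> x \<notin> young_diagram lam \<Longrightarrow> T x = 0"
  unfolding SYT_def by blast

lemma SYT_le: "T \<in> SYT lam \<Longrightarrow> T x \<le> sum_list lam"
proof (cases "x \<in> young_diagram lam")
  case True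
  assume "T \<in> SYT lam"
  then show ?thesis using SYT_val True by fastforce
next
  case False
  assume "T \<in> SYT lam"
  then show ?thesis using SYT_out False by fastforce
qed

lemma remove_corner:
  assumes Y: "young_diagram lam = insert cc (young_diagram lam')"
    and nc: "cc \<notin> young_diagram lam'"
    and N: "sum_list lam = Suc (sum_list lam')"
    and corner: "\<And>i j. cc = (i, j) \<Longrightarrow> (i, j+1) \<notin> young_diagram lam \<and> (i+1, j) \<notin> young_diagram lam"
  shows "bij_betw (\<lambda>T. T(cc := sum_list lam)) (SYT lam') {T \<in> SYT lam. T cc = sum_list lam}"
proof (rule bij_betwI[where g = "\<lambda>T. T(cc := 0)"])
  let ?M = "sum_list lam'" and ?N = "sum_list lam"
  show "(\<lambda>T. T(cc := ?N)) \<in> SYT lam' \<rightarrow> {T \<in> SYT lam. T cc = ?N}"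
  proof
    fix T assume T: "T \<in> SYT lam'"
    have b: "bij_betw T (young_diagram lam') {1..?M}" using T unfolding SYT_def by auto
    have "bij_betw (T(cc := ?N)) (young_diagram lam) {1..?N}"
      unfolding bij_betw_def
    proof
      have inj: "inj_on T (young_diagram lam')" and im: "T ` young_diagram lam' = {1..?M}"
        using b unfolding bij_betw_def by auto
      have inj': "inj_on (T(cc := ?N)) (young_diagram lam')"
        using inj nc by (simp add: inj_on_def)
      have im': "(T(cc := ?N)) ` young_diagram lam' = {1..?M}"
      proof -
        have "(T(cc := ?N)) ` young_diagram lam' = T ` young_diagram lam'"
          by (rule image_cong) (use nc in auto)
        then show ?thesis using im by simp
      qed
      have notin: "?N \<notin> {1..?M}" using N by simp
      show "inj_on (T(cc := ?N)) (young_diagram lam)"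
        unfolding Y using inj' im' notin nc by (simp add: inj_on_insert)
      have "{1..?N} = insert ?N {1..?M}" using N by auto
      moreover have "(T(cc := ?N)) ` young_diagram lam = insert ?N {1..?M}"
        unfolding Y image_insert im' by simp
      ultimately show "(T(cc := ?N)) ` young_diagram lam = {1..?N}" by simp
    qed
    moreover have "\<forall>i j. (i, j) \<in> young_diagram lam \<and> (i, j + 1) \<in> young_diagram lam \<longrightarrow> (T(cc := ?N)) (i, j) < (T(cc := ?N)) (i, j + 1)"
    proof (intro allI impI)
      fix i j assume h: "(i, j) \<in> young_diagram lam \<and> (i, j + 1) \<in> young_diagram lam"
      show "(T(cc := ?N)) (i, j) < (T(cc := ?N)) (i, j + 1)"
      proof (cases "cc = (i, j)")
        case True then show ?thesis using corner h by blast
      next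
        case F: False
        show ?thesis
        proof (cases "cc = (i, j+1)")
          case True
          then have "(i,j) \<in> young_diagram lam'" using h F Y by auto
          then show ?thesis using SYT_val[OF T] True F N by fastforce
        next
          case False
          then show ?thesis using F h Y T unfolding SYT_def by auto
        qed
      qed
    qed
    moreover have "\<forall>i j. (i, j) \<in> young_diagram lam \<and> (i + 1, j) \<in> young_diagram lam \<longrightarrow> (T(cc := ?N)) (i, j) < (T(cc := ?N)) (i + 1, j)"
    proof (intro allI impI)
      fix i j assume h: "(i, j) \<in> young_diagram lam \<and> (i + 1, j) \<in> young_diagram lam"
      show "(T(cc := ?N)) (i, j) < (T(cc := ?N)) (i + 1, j)"
      proof (cases "cc = (i, j)")
        case True then show ?thesis using corner h by blast
      next
        case F: False
        show ?thesis
        proof (cases "cc = (i+1, j)")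
          case True
          then have "(i,j) \<in> young_diagram lam'" using h F Y by auto
          then show ?thesis using SYT_val[OF T] True F N by fastforce
        next
          case False
          then show ?thesis using F h Y T unfolding SYT_def by auto
        qed
      qed
    qed
    moreover have "\<forall>c. c \<notin> young_diagram lam \<longrightarrow> (T(cc := ?N)) c = 0"
      using T Y unfolding SYT_def by auto
    ultimately show "T(cc := ?N) \<in> {T \<in> SYT lam. T cc = ?N}" unfolding SYT_def by simp
  qed
  show "(\<lambda>T. T(cc := 0)) \<in> {T \<in> SYT lam. T cc = ?N} \<rightarrow> SYT lam'"
  proof
    fix T assume T: "T \<in> {T \<in> SYT lam. T cc = ?N}"
    then have TS: "T \<in> SYT lam" and Tc: "T cc = ?N" by auto
    have b: "bij_betw T (young_diagram lam) {1..?N}" using TS unfolding SYT_def by auto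
    have "bij_betw T (young_diagram lam - {cc}) ({1..?N} - {T cc})"
      using b Y by (intro bij_betw_DiffI[OF b]) (auto simp: bij_betw_def)
    moreover have "young_diagram lam - {cc} = young_diagram lam'" using Y nc by auto
    moreover have "{1..?N} - {T cc} = {1..?M}" using Tc N by auto
    ultimately have "bij_betw T (young_diagram lam') {1..?M}" by simp
    then have "bij_betw (T(cc:=0)) (young_diagram lam') {1..?M}"
      by (rule bij_betw_cong[THEN iffD1, rotated]) (use nc in auto)
    moreover have "\<forall>c. c \<notin> young_diagram lam' \<longrightarrow> (T(cc := 0)) c = 0"
      using TS Y unfolding SYT_def by auto
    ultimately show "T(cc := 0) \<in> SYT lam'"
      using TS Y nc unfolding SYT_def by auto
  qed
  show "\<And>x. x \<in> SYT lam' \<Longrightarrow> (x(cc := ?N))(cc := 0) = x"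
    using SYT_out[OF _ nc] by (simp add: fun_upd_idem_iff)
  show "\<And>y. y \<in> {T \<in> SYT lam. T cc = ?N} \<Longrightarrow> (y(cc := 0))(cc := ?N) = y"
    by auto
qed

lemma card_bij_filter:
  assumes "bij_betw f A B"
  shows "card {x \<in> A. P (f x)} = card {y \<in> B. P y}"
proof (rule bij_betw_same_card)
  show "bij_betw f {x \<in> A. P (f x)} {y \<in> B. P y}"
    using assms unfolding bij_betw_def inj_on_def by auto
qed

lemma corner_card:
  assumes Y: "young_diagram lam = insert cc (young_diagram lam')"
    and nc: "cc \<notin> young_diagram lam'"
    and N: "sum_list lam = Suc (sum_list lam')"
    and corner: "\<And>i j. cc = (i, j) \<Longrightarrow> (i, j+1) \<notin> young_diagram lam \<and> (i+1, j) \<notin> young_diagram lam"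
  shows "card {T \<in> SYT lam. T cc = sum_list lam \<and> P T} = card {T \<in> SYT lam'. P (T(cc := sum_list lam))}"
proof -
  have "card {T \<in> SYT lam'. P (T(cc := sum_list lam))} = card {T \<in> {T \<in> SYT lam. T cc = sum_list lam}. P T}"
    by (rule card_bij_filter[OF remove_corner[OF assms]])
  also have "{T \<in> {T \<in> SYT lam. T cc = sum_list lam}. P T} = {T \<in> SYT lam. T cc = sum_list lam \<and> P T}" by auto
  finally show ?thesis by (rule sym)
qed

lemma max_cell:
  assumes T: "T \<in> SYT lam" and pos: "0 < sum_list lam" and v: "T (i, j) = sum_list lam"
  shows "(i, j) \<in> young_diagram lam" "(i, j+1) \<notin> young_diagram lam" "(i+1, j) \<notin> young_diagram lam"
proof -
  show 1: "(i, j) \<in> young_diagram lam"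
  proof (rule ccontr)
    assume "(i, j) \<notin> young_diagram lam"
    then have "T (i, j) = 0" by (rule SYT_out[OF T])
    with v pos show False by linarith
  qed
  show "(i, j+1) \<notin> young_diagram lam"
  proof
    assume "(i, j+1) \<in> young_diagram lam"
    then have "T (i,j) < T (i, j+1)" using T 1 unfolding SYT_def by auto
    then show False using SYT_le[OF T, of "(i,j+1)"] v by simp
  qed
  show "(i+1, j) \<notin> young_diagram lam"
  proof
    assume "(i+1, j) \<in> young_diagram lam"
    then have "T (i,j) < T (i+1, j)" using T 1 unfolding SYT_def by auto
    then show False using SYT_le[OF T, of "(i+1,j)"] v by simp
  qed
qed

lemma max_exists:
  assumes T: "T \<in> SYT lam" and pos: "0 < sum_list lam"
  shows "\<exists>x \<in> young_diagram lam. T x = sum_list lam"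
proof -
  have "T ` young_diagram lam = {1..sum_list lam}" using T unfolding SYT_def bij_betw_def by auto
  moreover have "sum_list lam \<in> {1..sum_list lam}" using pos by simp
  ultimately show ?thesis by (metis imageE)
qed

lemma max_unique:
  assumes T: "T \<in> SYT lam" and pos: "0 < sum_list lam" and "T x = sum_list lam" "T y = sum_list lam"
  shows "x = y"
proof -
  have "x \<in> young_diagram lam" "y \<in> young_diagram lam" using SYT_out[OF T] assms by (metis not_gr_zero)+
  moreover have "inj_on T (young_diagram lam)" using T unfolding SYT_def bij_betw_def by auto
  ultimately show ?thesis using assms inj_on_def by metis
qed

lemma yd_del1: "b < a \<Longrightarrow> young_diagram [a,b,c] = insert (1,a) (young_diagram [a-1,b,c])"
  by (rule set_eqI, case_tac x) (auto simp: yd3)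
lemma yd_del2: "c < b \<Longrightarrow> young_diagram [a,b,c] = insert (2,b) (young_diagram [a,b-1,c])"
  by (rule set_eqI, case_tac x) (auto simp: yd3)
lemma yd_del3: "0 < c \<Longrightarrow> young_diagram [a,b,c] = insert (3,c) (young_diagram [a,b,c-1])"
  by (rule set_eqI, case_tac x) (auto simp: yd3)

lemma rec3:
  assumes ba: "b \<le> a" and cb: "c \<le> b" and pos: "0 < a+b+c"
  shows "card {T \<in> SYT [a,b,c]. P T} =
   (if b < a then card {T \<in> SYT [a-1,b,c]. P (T((1,a) := a+b+c))} else 0) +
   (if c < b then card {T \<in> SYT [a,b-1,c]. P (T((2,b) := a+b+c))} else 0) +
   (if 0 < c then card {T \<in> SYT [a,b,c-1]. P (T((3,c) := a+b+c))} else 0)"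
proof -
  let ?S = "SYT [a,b,c]"
  let ?Y = "young_diagram [a,b,c]"
  have sN: "sum_list [a,b,c] = a+b+c" by simp
  have pos': "0 < sum_list [a,b,c]" using pos by simp
  define A where "A x = {T \<in> ?S. T x = a+b+c \<and> P T}" for x
  have finA: "finite (A x)" for x unfolding A_def using SYT_finite by auto
  have split: "{T \<in> ?S. P T} = A (1,a) \<union> A (2,b) \<union> A (3,c)"
  proof
    show "{T \<in> ?S. P T} \<subseteq> A (1,a) \<union> A (2,b) \<union> A (3,c)"
    proof
      fix T assume T: "T \<in> {T \<in> ?S. P T}"
      then have TS: "T \<in> ?S" by simp
      obtain x where x: "x \<in> ?Y" "T x = sum_list [a,b,c]" using max_exists[OF TS pos'] by blast
      obtain i j where ij: "x = (i,j)" by (cases x)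
      have "(i, j+1) \<notin> ?Y" using max_cell[OF TS pos'] x ij by blast
      then have "x = (1,a) \<or> x = (2,b) \<or> x = (3,c)" using x(1) unfolding ij by (auto simp: yd3)
      then show "T \<in> A (1,a) \<union> A (2,b) \<union> A (3,c)" using T x unfolding A_def by auto
    qed
    show "A (1,a) \<union> A (2,b) \<union> A (3,c) \<subseteq> {T \<in> ?S. P T}" unfolding A_def by auto
  qed
  have disj: "A x \<inter> A y = {}" if "x \<noteq> y" for x y
    using max_unique[OF _ pos', of _ x y] that unfolding A_def by (auto simp: add.assoc)
  have "card {T \<in> ?S. P T} = card (A (1,a)) + card (A (2,b)) + card (A (3,c))"
    unfolding split
    by (subst card_Un_disjoint; (simp add: finA disj Int_Un_distrib2)?)+
  moreover have "card (A (1,a)) = (if b < a then card {T \<in> SYT [a-1,b,c]. P (T((1,a) := a+b+c))} else 0)"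
  proof (cases "b < a")
    case True
    have "card (A (1,a)) = card {T \<in> SYT [a-1,b,c]. P (T((1,a) := sum_list [a,b,c]))}"
      unfolding A_def sN[symmetric]
      by (rule corner_card[OF yd_del1[OF True]]) (use True ba cb in \<open>auto simp: yd3\<close>)
    then show ?thesis using True by (simp add: add.assoc)
  next
    case False
    have "A (1,a) = {}"
    proof (rule ccontr)
      assume "A (1,a) \<noteq> {}"
      then obtain T where T: "T \<in> ?S" "T (1,a) = sum_list [a,b,c]" unfolding A_def by auto
      show False using max_cell[OF T(1) pos' T(2)] False ba by (auto simp: yd3)
    qed
    then show ?thesis using False by simp
  qed
  moreover have "card (A (2,b)) = (if c < b then card {T \<in> SYT [a,b-1,c]. P (T((2,b) := a+b+c))} else 0)"
  proof (cases "c < b")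
    case True
    have "card (A (2,b)) = card {T \<in> SYT [a,b-1,c]. P (T((2,b) := sum_list [a,b,c]))}"
      unfolding A_def sN[symmetric]
      by (rule corner_card[OF yd_del2[OF True]]) (use True ba cb in \<open>auto simp: yd3\<close>)
    then show ?thesis using True by (simp add: add.assoc)
  next
    case False
    have "A (2,b) = {}"
    proof (rule ccontr)
      assume "A (2,b) \<noteq> {}"
      then obtain T where T: "T \<in> ?S" "T (2,b) = sum_list [a,b,c]" unfolding A_def by auto
      show False using max_cell[OF T(1) pos' T(2)] False cb by (auto simp: yd3)
    qed
    then show ?thesis using False by simp
  qed
  moreover have "card (A (3,c)) = (if 0 < c then card {T \<in> SYT [a,b,c-1]. P (T((3,c) := a+b+c))} else 0)"
  proof (cases "0 < c")
    case True
    have "card (A (3,c)) = card {T \<in> SYT [a,b,c-1]. P (T((3,c) := sum_list [a,b,c]))}"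
      unfolding A_def sN[symmetric]
      by (rule corner_card[OF yd_del3[OF True]]) (use True ba cb in \<open>auto simp: yd3\<close>)
    then show ?thesis using True by (simp add: add.assoc)
  next
    case False
    have "A (3,c) = {}"
    proof (rule ccontr)
      assume "A (3,c) \<noteq> {}"
      then obtain T where T: "T \<in> ?S" "T (3,c) = sum_list [a,b,c]" unfolding A_def by auto
      show False using max_cell[OF T(1) pos' T(2)] False by (auto simp: yd3)
    qed
    then show ?thesis using False by simp
  qed
  ultimately show ?thesis by simp
qed

definition fc :: "nat \<Rightarrow> nat \<Rightarrow> nat \<Rightarrow> nat" where
  "fc a b c = card (SYT [a,b,c])"

lemma fc_rec:
  assumes "b \<le> a" "c \<le> b" "0 < a+b+c"
  shows "fc a b c = (if b < a then fc (a-1) b c else 0) + (if c < b then fc a (b-1) c else 0)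
     + (if 0 < c then fc a b (c-1) else 0)"
  using rec3[OF assms, of "\<lambda>_. True"] unfolding fc_def by simp

lemma fc_000: "fc 0 0 0 = 1"
proof -
  have Y: "young_diagram [0,0,0] = {}" by (auto simp: yd3)
  have "SYT [0,0,0] = {\<lambda>_. 0}"
    unfolding SYT_def Y by (auto simp: bij_betw_def)
  then show ?thesis unfolding fc_def by simp
qed

lemma poly_id:
  fixes c q p :: nat
  shows "p*(p+q+1)*(q+1)*(c+q+p+2) + (p+2)*(p+q+2)*q*(c+q+1) + (p+1)*(p+q+3)*(q+2)*c
     = (3*c+2*q+p)*(p+1)*(p+q+2)*(q+1)"
  by (simp add: algebra_simps)

lemma fc_formula_aux:
  "\<forall>c q p. 3*c+2*q+p = N \<longrightarrow>
     fc (c+q+p) (c+q) c * fact (c+q+p+2) * fact (c+q+1) * fact c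
       = fact N * (p+1)*(p+q+2)*(q+1)"
proof (induction N)
  case 0
  then show ?case by (simp add: fc_000)
next
  case (Suc N)
  show ?case
  proof (intro allI impI)
    fix c q p :: nat
    assume NN: "3*c+2*q+p = Suc N"
    let ?K = "fact (c+q+p+2) * fact (c+q+1) * fact c :: nat"
    have r: "fc (c+q+p) (c+q) c = (if c+q < c+q+p then fc (c+q+p-1) (c+q) c else 0)
      + (if c < c+q then fc (c+q+p) (c+q-1) c else 0) + (if 0 < c then fc (c+q+p) (c+q) (c-1) else 0)"
      by (rule fc_rec) (use NN in auto)
    have t1: "(if c+q < c+q+p then fc (c+q+p-1) (c+q) c else 0) * ?K
       = fact N * (p*(p+q+1)*(q+1)*(c+q+p+2))"
    proof (cases p)
      case 0 then show ?thesis by simp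
    next
      case (Suc p')
      have eqN: "3*c+2*q+p' = N" using NN Suc by simp
      have ih: "fc (c+q+p') (c+q) c * fact (c+q+p'+2) * fact (c+q+1) * fact c = fact N * (p'+1)*(p'+q+2)*(q+1)"
        by (rule Suc.IH[rule_format, OF eqN])
      have fct: "fact (c+q+p+2) = (c+q+p+2) * (fact (c+q+p'+2) :: nat)"
        using Suc fact_Suc[of "c+q+p'+2"] by simp
      have i1: "(if c+q < c+q+p then fc (c+q+p-1) (c+q) c else 0) = fc (c+q+p') (c+q) c" using Suc by simp
      have "(if c+q < c+q+p then fc (c+q+p-1) (c+q) c else 0) * ?K
          = (c+q+p+2) * (fc (c+q+p') (c+q) c * fact (c+q+p'+2) * fact (c+q+1) * fact c)"
        unfolding i1 fct by (simp only: ac_simps)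
      also have "\<dots> = (c+q+p+2) * (fact N * (p'+1)*(p'+q+2)*(q+1))" by (simp only: ih)
      also have "\<dots> = fact N * (p*(p+q+1)*(q+1)*(c+q+p+2))" using Suc by (simp add: algebra_simps)
      finally show ?thesis .
    qed
    have t2: "(if c < c+q then fc (c+q+p) (c+q-1) c else 0) * ?K
       = fact N * ((p+2)*(p+q+2)*q*(c+q+1))"
    proof (cases q)
      case 0 then show ?thesis by simp
    next
      case (Suc q')
      have eqN: "3*c+2*q'+(p+1) = N" using NN Suc by simp
      have ih: "fc (c+q'+(p+1)) (c+q') c * fact (c+q'+(p+1)+2) * fact (c+q'+1) * fact c = fact N * ((p+1)+1)*((p+1)+q'+2)*(q'+1)"
        by (rule Suc.IH[rule_format, OF eqN])
      have fct: "fact (c+q+1) = (c+q+1) * (fact (c+q'+1) :: nat)"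
        using Suc fact_Suc[of "c+q'+1"] by simp
      have e: "c+q'+(p+1) = c+q+p" "c+q' = c+q-1" "c+q'+(p+1)+2 = c+q+p+2" using Suc by auto
      have i2: "(if c < c+q then fc (c+q+p) (c+q-1) c else 0) = fc (c+q'+(p+1)) (c+q') c" using Suc by simp
      have "(if c < c+q then fc (c+q+p) (c+q-1) c else 0) * ?K
          = (c+q+1) * (fc (c+q'+(p+1)) (c+q') c * fact (c+q'+(p+1)+2) * fact (c+q'+1) * fact c)"
        unfolding i2 fct e(3) by (simp only: ac_simps)
      also have "\<dots> = (c+q+1) * (fact N * ((p+1)+1)*((p+1)+q'+2)*(q'+1))" by (simp only: ih)
      also have "\<dots> = fact N * ((p+2)*(p+q+2)*q*(c+q+1))" using Suc by (simp add: algebra_simps)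
      finally show ?thesis .
    qed
    have t3: "(if 0 < c then fc (c+q+p) (c+q) (c-1) else 0) * ?K
       = fact N * ((p+1)*(p+q+3)*(q+2)*c)"
    proof (cases c)
      case 0 then show ?thesis by simp
    next
      case (Suc c')
      have eqN: "3*c'+2*(q+1)+p = N" using NN Suc by simp
      have ih: "fc (c'+(q+1)+p) (c'+(q+1)) c' * fact (c'+(q+1)+p+2) * fact (c'+(q+1)+1) * fact c' = fact N * (p+1)*(p+(q+1)+2)*((q+1)+1)"
        by (rule Suc.IH[rule_format, OF eqN])
      have fct: "fact c = c * (fact c' :: nat)" using Suc by simp
      have e: "c'+(q+1)+p = c+q+p" "c'+(q+1) = c+q" "c'+(q+1)+p+2 = c+q+p+2" "c'+(q+1)+1 = c+q+1" "c - 1 = c'" using Suc by auto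
      have i3: "(if 0 < c then fc (c+q+p) (c+q) (c-1) else 0) = fc (c'+(q+1)+p) (c'+(q+1)) c'" using Suc by simp
      have "(if 0 < c then fc (c+q+p) (c+q) (c-1) else 0) * ?K
          = c * (fc (c'+(q+1)+p) (c'+(q+1)) c' * fact (c'+(q+1)+p+2) * fact (c'+(q+1)+1) * fact c')"
        unfolding i3 fct e(3) e(4) by (simp only: ac_simps)
      also have "\<dots> = c * (fact N * (p+1)*(p+(q+1)+2)*((q+1)+1))" by (simp only: ih)
      also have "\<dots> = fact N * ((p+1)*(p+q+3)*(q+2)*c)" by (simp add: algebra_simps)
      finally show ?thesis .
    qed
    have "fc (c+q+p) (c+q) c * ?K = fact N * (p*(p+q+1)*(q+1)*(c+q+p+2) + (p+2)*(p+q+2)*q*(c+q+1) + (p+1)*(p+q+3)*(q+2)*c)"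
      unfolding r distrib_right t1 t2 t3 by (simp only: distrib_left)
    also have "\<dots> = fact N * ((3*c+2*q+p)*(p+1)*(p+q+2)*(q+1))" by (simp only: poly_id)
    also have "\<dots> = fact (Suc N) * ((p+1)*(p+q+2)*(q+1))" unfolding NN by (simp only: fact_Suc of_nat_id ac_simps)
    finally show "fc (c+q+p) (c+q) c * fact (c+q+p+2) * fact (c+q+1) * fact c = fact (Suc N) * (p+1)*(p+q+2)*(q+1)"
      by (simp only: mult.assoc)
  qed
qed

lemma fc_formula:
  "fc (c+q+p) (c+q) c * fact (c+q+p+2) * fact (c+q+1) * fact c
       = fact (3*c+2*q+p) * (p+1)*(p+q+2)*(q+1)"
  using fc_formula_aux by blast

lemma L_true[simp]: "sum_list lam < N \<Longrightarrow> {T \<in> SYT lam. T y < N} = SYT lam"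
  using SYT_le[of _ lam y] by fastforce

lemma L_false[simp]: "sum_list lam < N \<Longrightarrow> {T \<in> SYT lam. N < T y} = {}"
  using SYT_le[of _ lam y] by fastforce

lemma hcount:
  "card {T \<in> SYT [m+3,m+3,m+3]. T (3,m+1) < T (2,m+2)} = 2 * fc (m+3) (m+1) (m+1) + 3 * fc (m+2) (m+1) (m+1)"
proof -
  define h where "h lam = card {T \<in> SYT lam. T (3,m+1) < T (2,m+2)}" for lam
  have h1: "h [m+3,m+3,m+3] = h [m+3,m+3,m+2]"
    unfolding h_def by (subst rec3) auto
  have h2: "h [m+3,m+3,m+2] = h [m+3,m+2,m+2] + h [m+3,m+3,m+1]"
    unfolding h_def by (subst rec3) auto
  have h3: "h [m+3,m+3,m+1] = h [m+3,m+2,m+1]"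
    unfolding h_def by (subst rec3) auto
  have h4: "h [m+3,m+2,m+2] = h [m+2,m+2,m+2] + h [m+3,m+2,m+1]"
    unfolding h_def by (subst rec3) auto
  have h5: "h [m+3,m+2,m+1] = h [m+2,m+2,m+1] + fc (m+3) (m+1) (m+1)"
    unfolding h_def fc_def by (subst rec3) auto
  have h6: "h [m+2,m+2,m+2] = h [m+2,m+2,m+1]"
    unfolding h_def by (subst rec3) auto
  have h7: "h [m+2,m+2,m+1] = fc (m+2) (m+1) (m+1)"
    unfolding h_def fc_def by (subst rec3) auto
  show ?thesis using h1 h2 h3 h4 h5 h6 h7 unfolding h_def by simp
qed

definition rot :: "nat \<Rightarrow> (nat \<times> nat \<Rightarrow> nat) \<Rightarrow> (nat \<times> nat \<Rightarrow> nat)" where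
  "rot n T = (\<lambda>(i,j). if (i,j) \<in> young_diagram [n,n,n] then 3*n+1 - T (4-i, n+1-j) else 0)"

lemma ydn: "(i, j) \<in> young_diagram [n,n,n] \<longleftrightarrow> 1 \<le> j \<and> j \<le> n \<and> 1 \<le> i \<and> i \<le> 3"
  by (auto simp: yd3)

lemma sig_mem: "(i, j) \<in> young_diagram [n,n,n] \<Longrightarrow> (4-i, n+1-j) \<in> young_diagram [n,n,n]"
  by (auto simp: ydn)

lemma rot_SYT:
  assumes T: "T \<in> SYT [n,n,n]"
  shows "rot n T \<in> SYT [n,n,n]"
proof -
  let ?Y = "young_diagram [n,n,n]"
  have sl: "sum_list [n,n,n] = 3*n" by simp
  have bT0: "bij_betw T ?Y {1..sum_list [n,n,n]}" using T unfolding SYT_def by blast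
  have bT: "bij_betw T ?Y {1..3*n}" using bT0 by (simp only: sl)
  have bs: "bij_betw (\<lambda>(i,j). (4-i, n+1-j)) ?Y ?Y"
    by (rule bij_betw_byWitness[where f'="\<lambda>(i,j). (4-i, n+1-j)"]) (auto simp: ydn)
  have bv: "bij_betw (\<lambda>v. 3*n+1 - v) {1..3*n} {1..3*n}"
    by (rule bij_betw_byWitness[where f'="\<lambda>v. 3*n+1 - v"]) auto
  have "bij_betw ((\<lambda>v. 3*n+1 - v) \<circ> T \<circ> (\<lambda>(i,j). (4-i, n+1-j))) ?Y {1..3*n}"
    by (rule bij_betw_trans[OF bs bij_betw_trans[OF bT bv]])
  then have b: "bij_betw (rot n T) ?Y {1..3*n}"
    by (rule bij_betw_cong[THEN iffD1, rotated]) (auto simp: rot_def)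
  have vT: "T x \<in> {1..3*n}" if "x \<in> ?Y" for x
  proof -
    have "T x \<in> {1..sum_list [n,n,n]}" by (rule SYT_val[OF T that])
    then show ?thesis by (simp only: sl)
  qed
  have rowT: "\<And>i j. (i,j) \<in> ?Y \<Longrightarrow> (i,j+1) \<in> ?Y \<Longrightarrow> T (i,j) < T (i,j+1)"
    using T unfolding SYT_def by blast
  have colT: "\<And>i j. (i,j) \<in> ?Y \<Longrightarrow> (i+1,j) \<in> ?Y \<Longrightarrow> T (i,j) < T (i+1,j)"
    using T unfolding SYT_def by blast
  have row: "rot n T (i, j) < rot n T (i, j + 1)" if h: "(i, j) \<in> ?Y" "(i, j + 1) \<in> ?Y" for i j
  proof -
    have m1: "(4-i, n-j) \<in> ?Y" "(4-i, n-j+1) \<in> ?Y" using h by (auto simp: ydn)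
    have "T (4-i, n-j) < T (4-i, n-j+1)" by (rule rowT[OF m1])
    moreover have "n+1-j = n-j+1" "n+1-(j+1) = n-j" using h by (auto simp: ydn)
    moreover have "T (4-i, n-j+1) \<le> 3*n" using vT[OF m1(2)] by simp
    moreover have e: "n+1-j = n-j+1" "n+1-(j+1) = n-j" using h by (auto simp: ydn)
    moreover have "rot n T (i,j) = 3*n+1 - T (4-i, n-j+1)" using h e unfolding rot_def by simp
    moreover have "rot n T (i,j+1) = 3*n+1 - T (4-i, n-j)" using h e unfolding rot_def by simp
    ultimately show ?thesis by linarith
  qed
  have col: "rot n T (i, j) < rot n T (i+1, j)" if h: "(i, j) \<in> ?Y" "(i+1, j) \<in> ?Y" for i j
  proof -
    have m1: "(3-i, n+1-j) \<in> ?Y" "(3-i+1, n+1-j) \<in> ?Y" using h by (auto simp: ydn)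
    have "T (3-i, n+1-j) < T (3-i+1, n+1-j)" by (rule colT[OF m1])
    moreover have "4-i = 3-i+1" "4-(i+1) = 3-i" using h by (auto simp: ydn)
    moreover have "T (3-i+1, n+1-j) \<le> 3*n" using vT[OF m1(2)] by simp
    moreover have e: "4-i = 3-i+1" "4-(i+1) = 3-i" using h by (auto simp: ydn)
    moreover have "rot n T (i,j) = 3*n+1 - T (3-i+1, n+1-j)" using h e unfolding rot_def by simp
    moreover have "rot n T (i+1,j) = 3*n+1 - T (3-i, n+1-j)" using h e unfolding rot_def by simp
    ultimately show ?thesis by linarith
  qed
  have out: "\<forall>c. c \<notin> ?Y \<longrightarrow> rot n T c = 0" unfolding rot_def by auto
  have b': "bij_betw (rot n T) ?Y {1..sum_list [n,n,n]}" using b by (simp only: sl)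
  show ?thesis unfolding SYT_def using b' row col out by auto
qed

lemma rot_rot:
  assumes T: "T \<in> SYT [n,n,n]"
  shows "rot n (rot n T) = T"
proof (rule ext)
  fix x :: "nat \<times> nat"
  obtain i j where x: "x = (i,j)" by (cases x)
  show "rot n (rot n T) x = T x"
  proof (cases "x \<in> young_diagram [n,n,n]")
    case True
    have m: "(4-i, n+1-j) \<in> young_diagram [n,n,n]" using True x by (rule_tac sig_mem) simp
    have e: "4 - (4-i) = i" "n+1-(n+1-j) = j" using True x by (auto simp: ydn)
    have v: "T (i,j) \<in> {1..sum_list [n,n,n]}" using SYT_val[OF T] True x by simp
    have v': "T (i,j) \<le> 3*n" using v by simp
    have "rot n (rot n T) x = 3*n+1 - rot n T (4-i, n+1-j)" using True x unfolding rot_def by simp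
    also have "rot n T (4-i, n+1-j) = 3*n+1 - T (i,j)" using m e unfolding rot_def by simp
    also have "3*n+1 - (3*n+1 - T (i,j)) = T (i,j)" using v' by simp
    finally show ?thesis using x by simp
  next
    case False
    then show ?thesis using SYT_out[OF T False] x unfolding rot_def by auto
  qed
qed

lemma rot_bij: "bij_betw (rot n) (SYT [n,n,n]) (SYT [n,n,n])"
  by (rule bij_betwI[where g = "rot n"]) (auto simp: rot_SYT rot_rot)

lemma alg:
  fixes R X Y Z x :: real
  assumes R: "R > 0" and x: "x \<ge> 0"
    and X: "X = 12*(3*x+5)*R/(x+5)"
    and Y: "Y = 6*R"
    and Z: "Z = 18*(3*x+8)*(3*x+7)*(3*x+5)*R/((x+5)*(x+4)*(x+3))"
  shows "((2*X+3*Y) - (Z - (2*X+3*Y))) / Z = - ((17 * (x+3) - 4) * ((x+3) - 3)) / (3 * (3 * (x+3) - 1) * (3 * (x+3) - 4))"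
proof -
  have p: "x+5 > 0" "x+4 > 0" "x+3>0" "3*x+8>0" "3*x+7>0" "3*x+5>0" using x by auto
  have S: "2*X+3*Y = 30*(3*x+7)*R/(x+5)" unfolding X Y using p by (simp add: field_simps; (simp add: algebra_simps)?)
  have Zp: "Z > 0" unfolding Z using p R by simp
  have "((2*X+3*Y) - (Z - (2*X+3*Y))) / Z = 2*(2*X+3*Y)/Z - 1" using Zp by (simp add: field_simps)
  also have "2*(2*X+3*Y)/Z = 10*(x+4)*(x+3)/(3*(3*x+8)*(3*x+5))"
  proof -
    have e: "Z * (10*(x+4)*(x+3)/(3*(3*x+8)*(3*x+5))) = 2*(2*X+3*Y)"
    proof -
      have gen: "\<And>a b c d e f :: real. a > 0 \<Longrightarrow> b > 0 \<Longrightarrow> c > 0 \<Longrightarrow> d > 0 \<Longrightarrow> f > 0 \<Longrightarrow>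
        18*d*e*f*R/(a*b*c) * (10*b*c/(3*d*f)) = 2*(30*e*R/a)"
        by (simp add: field_simps)
      show ?thesis unfolding S Z using gen[OF p(1) p(2) p(3) p(4) p(6), of "3*x+7"] by (simp add: mult.assoc)
    qed
    have "2*(2*X+3*Y)/Z = (Z * (10*(x+4)*(x+3)/(3*(3*x+8)*(3*x+5)))) / Z" by (simp only: e)
    also have "\<dots> = 10*(x+4)*(x+3)/(3*(3*x+8)*(3*x+5))" using Zp by simp
    finally show ?thesis .
  qed
  also have "10*(x+4)*(x+3)/(3*(3*x+8)*(3*x+5)) - 1 = - ((17 * (x+3) - 4) * ((x+3) - 3)) / (3 * (3 * (x+3) - 1) * (3 * (x+3) - 4))"
  proof -
    have den: "3 * (3 * (x+3) - 1) * (3 * (x+3) - 4) = 3*(3*x+8)*(3*x+5)" by (simp add: algebra_simps)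
    have num: "- ((17 * (x+3) - 4) * ((x+3) - 3)) = 10*(x+4)*(x+3) - 3*(3*x+8)*(3*x+5)" by (simp add: algebra_simps)
    have D: "3*(3*x+8)*(3*x+5) \<noteq> (0::real)" using p by simp
    show ?thesis unfolding den num using D by (simp add: diff_divide_distrib)
  qed
  finally show ?thesis .
qed

lemma real_step:
  fixes X F G x K D :: real
  assumes "Q > 0" and "X * D = K * F" and "D = E * Q"
  shows "X * E = K * (F / Q)"
  using assms by (simp add: field_simps)


lemma fc_formula':
  assumes "a = c+q+p" "b = c+q" "N = 3*c+2*q+p" "A = a+2" "B = b+1" "K = (p+1)*(p+q+2)*(q+1)"
  shows "fc a b c * fact A * fact B * fact c = fact N * K"
  unfolding assms by (subst fc_formula) (simp only: mult.assoc)
lemma nX: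
  fixes m :: nat
  shows "fc (m+3) (m+1) (m+1) * fact (m+5) * fact (m+2) * fact (m+1) = fact (3*m+5) * 12"
  by (rule fc_formula'[where q=0 and p=2]) simp_all
lemma nY:
  fixes m :: nat
  shows "fc (m+2) (m+1) (m+1) * fact (m+4) * fact (m+2) * fact (m+1) = fact (3*m+4) * 6"
  by (rule fc_formula'[where q=0 and p=1]) simp_all
lemma nZ:
  fixes m :: nat
  shows "fc (m+3) (m+3) (m+3) * fact (m+5) * fact (m+4) * fact (m+3) = fact (3*m+9) * 2"
  by (rule fc_formula'[where q=0 and p=0]) simp_all
lemma fs: "k' = Suc k \<Longrightarrow> (fact k'::real) = (real k + 1) * fact k" by (simp add: algebra_simps)
lemma f1:
  fixes m :: nat and x G :: real
  assumes "x = real m" "G = fact (m+1)"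
  shows "(fact (m+2)::real) = (x+2) * G" "(fact (m+3)::real) = (x+3) * (x+2) * G"
   "(fact (m+4)::real) = (x+4) * (x+3) * (x+2) * G" "(fact (m+5)::real) = (x+5) * (x+4) * (x+3) * (x+2) * G"
proof -
  have a: "(fact (m+2)::real) = (x+2) * G" unfolding assms by (subst fs[of _ "m+1"]) (simp_all add: algebra_simps)
  have b: "(fact (m+3)::real) = (x+3) * fact (m+2)" unfolding assms by (subst fs[of _ "m+2"]) (simp_all add: algebra_simps)
  have c: "(fact (m+4)::real) = (x+4) * fact (m+3)" unfolding assms by (subst fs[of _ "m+3"]) (simp_all add: algebra_simps)
  have d: "(fact (m+5)::real) = (x+5) * fact (m+4)" unfolding assms by (subst fs[of _ "m+4"]) (simp_all add: algebra_simps)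
  show "(fact (m+2)::real) = (x+2) * G" by (rule a)
  show "(fact (m+3)::real) = (x+3) * (x+2) * G" unfolding b a by (simp only: mult.assoc)
  show "(fact (m+4)::real) = (x+4) * (x+3) * (x+2) * G" unfolding c b a by (simp only: mult.assoc)
  show "(fact (m+5)::real) = (x+5) * (x+4) * (x+3) * (x+2) * G" unfolding d c b a by (simp only: mult.assoc)
qed
lemma f2:
  fixes m :: nat and x F :: real
  assumes "x = real m" "F = fact (3*m+4)"
  shows "(fact (3*m+5)::real) = (3*x+5) * F"
    "(fact (3*m+9)::real) = (3*x+9)*(3*x+8)*(3*x+7)*(3*x+6)*(3*x+5) * F"
proof -
  have a: "(fact (3*m+5)::real) = (3*x+5) * F" unfolding assms by (subst fs[of _ "3*m+4"]) (simp_all add: algebra_simps)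
  have b: "(fact (3*m+6)::real) = (3*x+6) * fact (3*m+5)" unfolding assms by (subst fs[of _ "3*m+5"]) (simp_all add: algebra_simps)
  have c: "(fact (3*m+7)::real) = (3*x+7) * fact (3*m+6)" unfolding assms by (subst fs[of _ "3*m+6"]) (simp_all add: algebra_simps)
  have d: "(fact (3*m+8)::real) = (3*x+8) * fact (3*m+7)" unfolding assms by (subst fs[of _ "3*m+7"]) (simp_all add: algebra_simps)
  have e: "(fact (3*m+9)::real) = (3*x+9) * fact (3*m+8)" unfolding assms by (subst fs[of _ "3*m+8"]) (simp_all add: algebra_simps)
  show "(fact (3*m+5)::real) = (3*x+5) * F" by (rule a)
  show "(fact (3*m+9)::real) = (3*x+9)*(3*x+8)*(3*x+7)*(3*x+6)*(3*x+5) * F" unfolding e d c b a by (simp only: mult.assoc)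
qed

theorem mainTheorem10:
  fixes n :: nat
  assumes "n \<ge> 3"
  shows "sorting_prob [n, n, n] (1, 3) (2, 2) =
    - ((17 * real n - 4) * (real n - 3)) / (3 * (3 * real n - 1) * (3 * real n - 4))"
proof -
  obtain m where n: "n = m + 3" using assms by (metis add.commute le_Suc_ex)
  let ?S = "SYT [n,n,n]"
  let ?Y = "young_diagram [n,n,n]"
  define E1 where "E1 = {T \<in> ?S. T (2,2) < T (1,3)}"
  define E2 where "E2 = {T \<in> ?S. T (1,3) < T (2,2)}"
  have sl: "sum_list [n,n,n] = 3*n" by simp
  have m13: "(1,3) \<in> ?Y" "(2,2) \<in> ?Y" using n by (auto simp: ydn)
  have e1: "card E1 = card {T \<in> ?S. T (3,m+1) < T (2,m+2)}"
  proof -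
    have "{T \<in> ?S. rot n T (3,m+1) < rot n T (2,m+2)} = E1"
    proof -
      have "rot n T (3,m+1) < rot n T (2,m+2) \<longleftrightarrow> T (2,2) < T (1,3)" if T: "T \<in> ?S" for T
      proof -
        have a: "rot n T (3,m+1) = 3*n+1 - T (1,3)" unfolding rot_def using n by (simp add: ydn)
        have b: "rot n T (2,m+2) = 3*n+1 - T (2,2)" unfolding rot_def using n by (simp add: ydn)
        have "T (1,3) \<le> 3*n" "T (2,2) \<le> 3*n" using SYT_le[OF T] sl by metis+
        then show ?thesis unfolding a b by linarith
      qed
      then show ?thesis unfolding E1_def by auto
    qed
    moreover have "card {T \<in> ?S. rot n T (3,m+1) < rot n T (2,m+2)} = card {T \<in> ?S. T (3,m+1) < T (2,m+2)}"
      by (rule card_bij_filter[OF rot_bij])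
    ultimately show ?thesis by simp
  qed
  have hc: "card E1 = 2 * fc (m+3) (m+1) (m+1) + 3 * fc (m+2) (m+1) (m+1)"
    unfolding e1 using hcount[of m] n by simp
  have E2eq: "E2 = ?S - E1"
  proof -
    have "T (1,3) \<noteq> T (2,2)" if T: "T \<in> ?S" for T
    proof
      assume "T (1,3) = T (2,2)"
      moreover have "inj_on T ?Y" using T unfolding SYT_def bij_betw_def by auto
      ultimately show False using m13 by (auto dest: inj_onD)
    qed
    note neq = this
    show ?thesis unfolding E1_def E2_def
    proof (rule set_eqI)
      fix T
      show "T \<in> {T \<in> ?S. T (1,3) < T (2,2)} \<longleftrightarrow> T \<in> ?S - {T \<in> ?S. T (2,2) < T (1,3)}"
        using neq[of T] by auto
    qed
  qed
  have fin: "finite ?S" by (rule SYT_finite)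
  have sub: "E1 \<subseteq> ?S" unfolding E1_def by auto
  have cE2: "card E2 = card ?S - card E1" unfolding E2eq by (rule card_Diff_subset[OF finite_subset[OF sub fin] sub])
  have le: "card E1 \<le> card ?S" by (rule card_mono[OF fin sub])
  have cS: "card ?S = fc (m+3) (m+3) (m+3)" unfolding fc_def n by simp
  have sp: "sorting_prob [n, n, n] (1, 3) (2, 2) = (real (card E1) - (real (card ?S) - real (card E1))) / real (card ?S)"
    unfolding sorting_prob_def E1_def[symmetric] E2_def[symmetric] cE2 using le by (simp add: of_nat_diff)
  define X where "X = real (fc (m+3) (m+1) (m+1))"
  define Yv where "Yv = real (fc (m+2) (m+1) (m+1))"
  define Z where "Z = real (fc (m+3) (m+3) (m+3))"
  define x where "x = real m"
  define G where "G = (fact (m+1) :: real)"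
  define F where "F = (fact (3*m+4) :: real)"
  define Q where "Q = (x+4)*(x+3)*(x+2)*(x+2)*G*G*G"
  define R where "R = F / Q"
  have Gp: "G > 0" unfolding G_def by simp
  have Fp: "F > 0" unfolding F_def by simp
  have xp: "x \<ge> 0" unfolding x_def by simp
  have Qp: "Q > 0" unfolding Q_def using Gp xp by simp
  have Rp: "R > 0" unfolding R_def using Fp Qp by simp
  have f1': "fact (m+2) = (x+2) * G" "fact (m+3) = (x+3) * (x+2) * G"
   "fact (m+4) = (x+4) * (x+3) * (x+2) * G" "fact (m+5) = (x+5) * (x+4) * (x+3) * (x+2) * G"
    using f1[OF x_def G_def] by simp_all
  have f2': "fact (3*m+5) = (3*x+5) * F" "fact (3*m+9) = (3*x+9)*(3*x+8)*(3*x+7)*(3*x+6)*(3*x+5) * F"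
    using f2[OF x_def F_def] by simp_all
  have rX: "X * ((x+5)*(x+4)*(x+3)*(x+2)*G * ((x+2)*G) * G) = (12 * (3*x+5)) * F"
  proof -
    have "real (fc (m+3) (m+1) (m+1) * fact (m+5) * fact (m+2) * fact (m+1)) = real (fact (3*m+5) * 12)"
      by (simp only: nX)
    then have "X * fact (m+5) * fact (m+2) * fact (m+1) = fact (3*m+5) * 12"
      unfolding X_def of_nat_mult of_nat_fact by simp
    then show ?thesis unfolding f1' f2' G_def[symmetric] by (simp only: ac_simps)
  qed
  have rY: "Yv * ((x+4)*(x+3)*(x+2)*G * ((x+2)*G) * G) = 6 * F"
  proof -
    have "real (fc (m+2) (m+1) (m+1) * fact (m+4) * fact (m+2) * fact (m+1)) = real (fact (3*m+4) * 6)"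
      by (simp only: nY)
    then have "Yv * fact (m+4) * fact (m+2) * fact (m+1) = fact (3*m+4) * 6"
      unfolding Yv_def of_nat_mult of_nat_fact by simp
    then show ?thesis unfolding f1' F_def[symmetric] G_def[symmetric] by (simp only: ac_simps)
  qed
  have rZ: "Z * ((x+5)*(x+4)*(x+3)*(x+2)*G * ((x+4)*(x+3)*(x+2)*G) * ((x+3)*(x+2)*G)) = (2 * ((3*x+9)*(3*x+8)*(3*x+7)*(3*x+6)*(3*x+5))) * F"
  proof -
    have "real (fc (m+3) (m+3) (m+3) * fact (m+5) * fact (m+4) * fact (m+3)) = real (fact (3*m+9) * 2)"
      by (simp only: nZ)
    then have "Z * fact (m+5) * fact (m+4) * fact (m+3) = fact (3*m+9) * 2"
      unfolding Z_def of_nat_mult of_nat_fact by simp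
    then show ?thesis unfolding f1' f2' by (simp only: ac_simps)
  qed
  have X': "X * (x+5) = (12 * (3*x+5)) * R"
    unfolding R_def by (rule real_step[OF Qp rX]) (simp only: Q_def ac_simps)
  have Y': "Yv * 1 = 6 * R"
    unfolding R_def by (rule real_step[OF Qp rY]) (simp only: Q_def ac_simps mult_1_left mult_1_right)
  have Z': "Z * ((x+5)*(x+4)*(x+3)*(x+3)*(x+2)) = (2 * ((3*x+9)*(3*x+8)*(3*x+7)*(3*x+6)*(3*x+5))) * R"
    unfolding R_def by (rule real_step[OF Qp rZ]) (simp only: Q_def ac_simps)
  have Xe: "X = 12*(3*x+5)*R/(x+5)" using X' xp by (simp add: eq_divide_eq)
  have Ye: "Yv = 6*R" using Y' by simp
  have Ze: "Z = 18*(3*x+8)*(3*x+7)*(3*x+5)*R/((x+5)*(x+4)*(x+3))"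
  proof -
    have pz: "(x+5)*(x+4)*(x+3)*(x+3)*(x+2) > 0" using xp by simp
    have "Z = (2 * ((3*x+9)*(3*x+8)*(3*x+7)*(3*x+6)*(3*x+5))) * R / ((x+5)*(x+4)*(x+3)*(x+3)*(x+2))"
    proof -
      have Dnz: "(x+5)*(x+4)*(x+3)*(x+3)*(x+2) \<noteq> 0" using pz by linarith
      show ?thesis by (rule nonzero_eq_divide_eq[OF Dnz, THEN iffD2]) (rule Z')
    qed
    also have "\<dots> = 18*(3*x+8)*(3*x+7)*(3*x+5)*R/((x+5)*(x+4)*(x+3))"
    proof -
      have gen: "\<And>a b c d :: real. a > 0 \<Longrightarrow> b > 0 \<Longrightarrow> c > 0 \<Longrightarrow> d > 0 \<Longrightarrow>
        2 * ((3*c)*(3*x+8)*(3*x+7)*(3*d)*(3*x+5)) * R / (a*b*c*c*d) = 18*(3*x+8)*(3*x+7)*(3*x+5)*R/(a*b*c)"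
        by (simp add: field_simps)
      have "3*x+9 = 3*(x+3)" "3*x+6 = 3*(x+2)" by simp_all
      then show ?thesis using gen[of "x+5" "x+4" "x+3" "x+2"] xp by simp
    qed
    finally show ?thesis .
  qed
  have "sorting_prob [n, n, n] (1, 3) (2, 2) = ((2*X+3*Yv) - (Z - (2*X+3*Yv))) / Z"
    unfolding sp hc cS X_def Yv_def Z_def by simp
  also have "\<dots> = - ((17 * (x+3) - 4) * ((x+3) - 3)) / (3 * (3 * (x+3) - 1) * (3 * (x+3) - 4))"
    by (rule alg[OF Rp xp Xe Ye Ze])
  finally show ?thesis unfolding x_def n by simp
qed

end
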